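(* Let $\pi=(\pi_n^{n+1}\colon(X_{n+1},f_{n+1})\to(X_n,f_n))_{n\ge1}$ be an inverse sequence of equivariant maps satisfying MLC(1), and suppose $(X_n,f_n)$ is a subshift of finite type for each $n\ge1$. Let $Y_n=CR(f_n)$, $g_n=f_n|_{Y_n}$, and $\tilde\pi_n^{n+1}=\pi_n^{n+1}|_{Y_{n+1}}\colon Y_{n+1}\to Y_n$. Then the inverse sequence $\tilde\pi=(\tilde\pi_n^{n+1}\colon(Y_{n+1},g_{n+1})\to(Y_n,g_n))_{n\ge1}$ satisfies MLC(1).
   Context: Equivariant means $\pi_n^{n+1}$ is continuous with $f_n\circ\pi_n^{n+1}=\pi_n^{n+1}\circ f_{n+1}$. For $m\ge n$, $\pi_n^m=\pi_n^{n+1}\circ\cdots\circ\pi_{m-1}^m$. An inverse sequence $(p_n\colon Z_{n+1}\to Z_n)$ satisfies MLC(1) if $p_n(Z_{n+1})=p_n(p_{n+1}(Z_{n+2}))$ for every $n$. A subshift of finite type is a system $(Z,\sigma|_Z)$ where $S$ is a finite discrete set, $\sigma\colon S^{\mathbb N}\to S^{\mathbb N}$, $\sigma((x_i)_{i\ge1})=(x_{i+1})_{i\ge1}$, is the shift on the product space, and there are $N>0$ and $F\subset S^{N+1}$ with $Z=\{x\in S^{\mathbb N}:(x_i,\dots,x_{i+N})\in F\ \forall i\ge1\}$. For a continuous map $g$ of a compact metric space $(Y,d)$, $CR(g)$ is the set of $y$ such that for every $\delta>0$ there is a finite sequence $y=y_0,y_1,\dots,y_k=y$, $k>0$, with $d(g(y_i),y_{i+1})\le\delta$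 for all $i<k$. *)

theory Defs
  imports "HOL-Analysis.Analysis"
begin

text \<open>One-sided sequences over an alphabet; index 0 plays the role of index 1.\<close>

definition shift :: "(nat \<Rightarrow> 'a) \<Rightarrow> (nat \<Rightarrow> 'a)" where
  "shift x = (\<lambda>i. x (Suc i))"

text \<open>Z is a subshift of finite type over the finite alphabet S (the map is the shift).\<close>
definition is_sft :: "'a set \<Rightarrow> (nat \<Rightarrow> 'a) set \<Rightarrow> bool" where
  "is_sft S Z \<longleftrightarrow> finite S \<and>
     (\<exists>N>0. \<exists>F. F \<subseteq> {w. length w = N + 1 \<and> set w \<subseteq> S} \<and>
        Z = {x. (\<forall>i. x i \<in> S) \<and> (\<forall>i. map x [i..<i + N + 1] \<in> F)})"

definition seq_top :: "(nat \<Rightarrow> 'a) topology" where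
  "seq_top = product_topology (\<lambda>_. discrete_topology UNIV) UNIV"

definition seq_dist :: "(nat \<Rightarrow> 'a) \<Rightarrow> (nat \<Rightarrow> 'a) \<Rightarrow> real" where
  "seq_dist x y = (if x = y then 0 else (1/2) ^ (LEAST i. x i \<noteq> y i))"

definition chain_recurrent ::
  "('b \<Rightarrow> 'b \<Rightarrow> real) \<Rightarrow> 'b set \<Rightarrow> ('b \<Rightarrow> 'b) \<Rightarrow> 'b set" where
  "chain_recurrent d Y g = {y \<in> Y. \<forall>\<delta>>0. \<exists>k>0. \<exists>z::nat \<Rightarrow> 'b.
      z 0 = y \<and> z k = y \<and> (\<forall>i\<le>k. z i \<in> Y) \<and> (\<forall>i<k. d (g (z i)) (z (Suc i)) \<le> \<delta>)}"

definition MLC1 :: "(nat \<Rightarrow> 'b set) \<Rightarrow> (nat \<Rightarrow> 'b \<Rightarrow> 'b) \<Rightarrow> bool" where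
  "MLC1 Z p \<longleftrightarrow> (\<forall>n. p n ` Z (Suc n) = p n ` p (Suc n) ` Z (Suc (Suc n)))"

end

theory Submission
  imports Defs
begin

definition agree :: "nat \<Rightarrow> (nat \<Rightarrow> 'a) \<Rightarrow> (nat \<Rightarrow> 'a) \<Rightarrow> bool" where
  "agree m x y \<longleftrightarrow> (\<forall>i<m. x i = y i)"

lemma agree_trans: "agree m x y \<Longrightarrow> agree m y z \<Longrightarrow> agree m x z"
  by (auto simp: agree_def)
lemma agree_sym: "agree m x y \<Longrightarrow> agree m y x"
  by (auto simp: agree_def)
lemma agree_mono: "agree M x y \<Longrightarrow> m \<le> M \<Longrightarrow> agree m x y"
  by (auto simp: agree_def)
lemma agree_shift: "agree (Suc m) x y \<Longrightarrow> agree m (shift x) (shift y)"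
  by (auto simp: agree_def shift_def)
lemma agree_all: "(\<And>m. agree m x y) \<Longrightarrow> x = y"
proof
  fix i assume "\<And>m. agree m x y" then show "x i = y i" using agree_def[of "Suc i"] by auto
qed

lemma dist_le_iff: "seq_dist x y \<le> (1/2::real) ^ m \<longleftrightarrow> agree m x y"
proof (cases "x = y")
  case True then show ?thesis by (simp add: seq_dist_def agree_def)
next
  case False
  define L where "L = (LEAST i. x i \<noteq> y i)"
  have ex: "\<exists>i. x i \<noteq> y i" using False by auto
  have L1: "x L \<noteq> y L" unfolding L_def using LeastI_ex[OF ex] .
  have L2: "\<And>i. i < L \<Longrightarrow> x i = y i" unfolding L_def using not_less_Least by blast
  have "seq_dist x y = (1/2) ^ L" using False by (simp add: seq_dist_def L_def)
  moreover have "((1/2::real) ^ L \<le> (1/2) ^ m) \<longleftrightarrow> m \<le> L"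
    by (simp add: power_decreasing_iff)
  moreover have "agree m x y \<longleftrightarrow> m \<le> L"
    using L1 L2 by (auto simp: agree_def) (meson not_le)
  ultimately show ?thesis by simp
qed

lemma cr_alt: "chain_recurrent seq_dist X shift = {y\<in>X. \<forall>m. \<exists>k>0. \<exists>z::nat \<Rightarrow> nat \<Rightarrow> 'a.
   z 0 = y \<and> z k = y \<and> (\<forall>i\<le>k. z i \<in> X) \<and> (\<forall>i<k. agree m (shift (z i)) (z (Suc i)))}"
proof (intro set_eqI iffI)
  fix y assume y: "y \<in> chain_recurrent seq_dist X shift"
  show "y \<in> {y\<in>X. \<forall>m. \<exists>k>0. \<exists>z::nat \<Rightarrow> nat \<Rightarrow> 'a.
   z 0 = y \<and> z k = y \<and> (\<forall>i\<le>k. z i \<in> X) \<and> (\<forall>i<k. agree m (shift (z i)) (z (Suc i)))}"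
  proof (safe)
    show "y \<in> X" using y by (simp add: chain_recurrent_def)
    fix m
    have "(0::real) < (1/2)^m" by simp
    then show "\<exists>k>0. \<exists>z::nat \<Rightarrow> nat \<Rightarrow> 'a.
   z 0 = y \<and> z k = y \<and> (\<forall>i\<le>k. z i \<in> X) \<and> (\<forall>i<k. agree m (shift (z i)) (z (Suc i)))"
      using y unfolding chain_recurrent_def dist_le_iff[symmetric] by blast
  qed
next
  fix y assume y: "y \<in> {y\<in>X. \<forall>m. \<exists>k>0. \<exists>z::nat \<Rightarrow> nat \<Rightarrow> 'a.
   z 0 = y \<and> z k = y \<and> (\<forall>i\<le>k. z i \<in> X) \<and> (\<forall>i<k. agree m (shift (z i)) (z (Suc i)))}"
  show "y \<in> chain_recurrent seq_dist X shift"
    unfolding chain_recurrent_def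
  proof (safe)
    show "y \<in> X" using y by simp
    fix \<delta> :: real assume "\<delta> > 0"
    then obtain m where m: "(1/2::real)^m < \<delta>" using real_arch_pow_inv[of \<delta> "1/2::real"] by auto
    obtain k z where kz: "k > 0" "z 0 = y" "z k = y" "\<forall>i\<le>k. z i \<in> X"
      "\<forall>i<k. agree m (shift (z i)) (z (Suc i))" using y by blast
    have "\<forall>i<k. seq_dist (shift (z i)) (z (Suc i)) \<le> \<delta>"
      using kz(5) m dist_le_iff by (metis less_eq_real_def order_trans)
    then show "\<exists>k>0. \<exists>z. z 0 = y \<and> z k = y \<and> (\<forall>i\<le>k. z i \<in> X) \<and> (\<forall>i<k. seq_dist (shift (z i)) (z (Suc i)) \<le> \<delta>)"
      using kz by blast
  qed
qed

lemma funpow_shift: "(shift ^^ j) x = (\<lambda>i. x (i + j))"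
  by (induction j arbitrary: x) (auto simp: shift_def funpow_Suc_right)


lemma sft_obtain:
  assumes "is_sft S X"
  obtains N F where "finite S" "N > 0"
    "X = {x. (\<forall>i. x i \<in> S) \<and> (\<forall>i. map x [i..<i + N + 1] \<in> F)}"
  using assms unfolding is_sft_def by blast

lemma sft_window:
  assumes X: "X = {x. (\<forall>i. x i \<in> S) \<and> (\<forall>i. map x [i..<i + N + 1] \<in> F)}"
    and h: "\<And>i. \<exists>x\<in>X. \<exists>j. \<forall>s\<le>N. v (i+s) = x (j+s)"
  shows "v \<in> X"
proof -
  have "v i \<in> S \<and> map v [i..<i + N + 1] \<in> F" for i
  proof -
    obtain x j where x: "x \<in> X" "\<forall>s\<le>N. v (i+s) = x (j+s)" using h by blast
    have "v i = x j" using x(2)[rule_format, of 0] by simp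
    moreover have "map v [i..<i + N + 1] = map x [j..<j + N + 1]"
      by (rule nth_equalityI) (use x(2) in \<open>auto simp del: upt_Suc\<close>)
    ultimately show ?thesis using x(1) X by auto
  qed
  then show ?thesis using X by auto
qed

lemma sft_shift:
  assumes "is_sft S X" "x \<in> X" shows "shift x \<in> X"
proof -
  obtain N F where X: "X = {x. (\<forall>i. x i \<in> S) \<and> (\<forall>i. map x [i..<i + N + 1] \<in> F)}"
    using assms(1) unfolding is_sft_def by blast
  show ?thesis
  proof (rule sft_window[OF X])
    fix i
    have "\<forall>s\<le>N. shift x (i + s) = x (Suc i + s)" by (simp add: shift_def)
    then show "\<exists>xa\<in>X. \<exists>j. \<forall>s\<le>N. shift x (i + s) = xa (j + s)" using assms(2) by blast
  qed
qed

lemma sft_funpow: "is_sft S X \<Longrightarrow> x \<in> X \<Longrightarrow> (shift ^^ j) x \<in> X"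
proof (induction j)
  case 0 then show ?case by simp
next
  case (Suc j) then show ?case using sft_shift[of S X "(shift ^^ j) x"] by simp
qed

lemma sft_vals: "is_sft S X \<Longrightarrow> x \<in> X \<Longrightarrow> x i \<in> S"
  unfolding is_sft_def by blast

lemma sft_closed:
  assumes "is_sft S X" "\<And>M. \<exists>x\<in>X. agree M x v" shows "v \<in> X"
proof -
  obtain N F where X: "X = {x. (\<forall>i. x i \<in> S) \<and> (\<forall>i. map x [i..<i + N + 1] \<in> F)}"
    using assms(1) unfolding is_sft_def by blast
  show ?thesis
  proof (rule sft_window[OF X])
    fix i
    obtain x where "x \<in> X" "agree (i + N + 1) x v" using assms(2) by blast
    then have "\<forall>s\<le>N. v (i + s) = x (i + s)" by (auto simp: agree_def)
    then show "\<exists>x\<in>X. \<exists>j. \<forall>s\<le>N. v (i + s) = x (j + s)" using \<open>x \<in> X\<close> by blast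
  qed
qed

lemma sft_periodic:
  assumes "is_sft S X" "y \<in> chain_recurrent seq_dist X shift"
  shows "\<exists>q\<in>X. \<exists>k>0. (shift ^^ k) q = q \<and> agree M q y"
proof -
  obtain N F where X: "X = {x. (\<forall>i. x i \<in> S) \<and> (\<forall>i. map x [i..<i + N + 1] \<in> F)}"
    using assms(1) unfolding is_sft_def by blast
  define M' where "M' = M + N"
  obtain k z where kz: "k > 0" "z 0 = y" "z k = y" "\<forall>i\<le>k. z i \<in> X"
      "\<forall>i<k. agree M' (shift (z i)) (z (Suc i))" using assms(2) unfolding cr_alt by blast
  define q where "q = (\<lambda>t. z (t mod k) 0)"
  have claim: "\<forall>t. q (t+s) = z (t mod k) s" if "s \<le> M'" for s
    using that
  proof (induction s)
    case 0 then show ?case by (simp add: q_def)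
  next
    case (Suc s)
    show ?case
    proof
      fix t
      have lt: "t mod k < k" using kz(1) by simp
      have "z (t mod k) (Suc s) = z (Suc (t mod k)) s"
        using kz(5)[rule_format, OF lt] Suc.prems by (auto simp: agree_def shift_def)
      also have "\<dots> = z (Suc t mod k) s"
        using kz(2,3) by (simp add: mod_Suc)
      also have "\<dots> = q (Suc t + s)" using Suc.IH Suc.prems by (metis Suc_leD)
      finally show "q (t + Suc s) = z (t mod k) (Suc s)" by simp
    qed
  qed
  have "q \<in> X"
  proof (rule sft_window[OF X])
    fix i
    have "z (i mod k) \<in> X" using kz(1,4) by (simp add: less_imp_le)
    moreover have "\<forall>s\<le>N. q (i+s) = z (i mod k) (0+s)" using claim by (simp add: M'_def)
    ultimately show "\<exists>x\<in>X. \<exists>j. \<forall>s\<le>N. q (i + s) = x (j + s)" by blast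
  qed
  moreover have "(shift ^^ k) q = q" by (simp add: funpow_shift q_def)
  moreover have "agree M q y" unfolding agree_def
  proof (intro allI impI)
    fix i assume "i < M"
    then have "q (0 + i) = z (0 mod k) i" using claim[of i] unfolding M'_def by (metis le_add1 less_imp_le order_trans)
    then show "q i = y i" using kz(2) by simp
  qed
  ultimately show ?thesis using kz(1) by blast
qed


lemma topspace_seq_top [simp]: "topspace seq_top = UNIV"
  by (simp add: seq_top_def)

lemma cont_pt:
  assumes c: "continuous_map (subtopology seq_top X1) (subtopology seq_top X0) f" and x: "x \<in> X1"
  shows "\<exists>M. \<forall>x'\<in>X1. agree M x' x \<longrightarrow> agree m (f x') (f x)"
proof -
  define U :: "(nat \<Rightarrow> 'b) set" where "U = PiE UNIV (\<lambda>i. if i < m then {f x i} else UNIV)"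
  have Uiff: "u \<in> U \<longleftrightarrow> agree m u (f x)" for u
    by (auto simp: U_def PiE_def extensional_def agree_def Pi_def)
  have "finite {i. (if i < m then {f x i} else UNIV) \<noteq> (UNIV :: 'b set)}"
    by (rule finite_subset[of _ "{..<m}"]) auto
  then have oU: "openin seq_top U"
    unfolding seq_top_def U_def by (subst openin_PiE_gen) auto
  have "openin (subtopology seq_top X0) (U \<inter> X0)"
    using oU by (auto simp: openin_subtopology)
  then have "openin (subtopology seq_top X1) {x' \<in> topspace (subtopology seq_top X1). f x' \<in> U \<inter> X0}"
    using c unfolding continuous_map_def by blast
  then obtain T where T: "openin seq_top T"
    "{x' \<in> topspace (subtopology seq_top X1). f x' \<in> U \<inter> X0} = T \<inter> X1"
    by (auto simp: openin_subtopology)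
  have fX: "\<And>x'. x' \<in> X1 \<Longrightarrow> f x' \<in> X0"
    using c by (auto simp: continuous_map_def)
  have "x \<in> T" using T(2) x fX[OF x] Uiff[of "f x"] by (auto simp: agree_def)
  then obtain V where V: "finite {i \<in> UNIV. V i \<noteq> topspace (discrete_topology (UNIV::'a set))}"
     "x \<in> PiE UNIV V" "PiE UNIV V \<subseteq> T"
    using T(1) unfolding seq_top_def openin_product_topology_alt by blast
  obtain M where M: "{i. V i \<noteq> UNIV} \<subseteq> {..<M}" using V(1) finite_nat_bounded by auto
  show ?thesis
  proof (intro exI ballI impI)
    fix x' assume x': "x' \<in> X1" "agree M x' x"
    have "x' \<in> PiE UNIV V"
    proof -
      have "x' i \<in> V i" for i
      proof (cases "i < M")
        case True then show ?thesis using x'(2) V(2) by (auto simp: agree_def PiE_def Pi_def)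
      next
        case False then show ?thesis using M by auto
      qed
      then show ?thesis by (auto simp: PiE_def extensional_def)
    qed
    then have "x' \<in> T \<inter> X1" using V(3) x' by auto
    then have "f x' \<in> U" using T(2) by blast
    then show "agree m (f x') (f x)" using Uiff by blast
  qed
qed


lemma seq_limit:
  fixes w :: "nat \<Rightarrow> nat \<Rightarrow> 'a"
  assumes S: "finite S" and w: "\<And>j i. w j i \<in> S"
  shows "\<exists>v. \<forall>M. infinite {j. agree M (w j) v}"
proof -
  define ch where "ch (A::nat set) i = (SOME a. a \<in> S \<and> infinite {j\<in>A. w j i = a})" for A i
  define J where "J = rec_nat (UNIV::nat set) (\<lambda>i A. {j\<in>A. w j i = ch A i})"
  have J0: "J 0 = UNIV" by (simp add: J_def)
  have JS: "J (Suc i) = {j \<in> J i. w j i = ch (J i) i}" for i by (simp add: J_def)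
  have ex: "\<exists>a. a\<in>S \<and> infinite {j\<in>A. w j i = a}" if "infinite A" for A i
  proof (rule ccontr)
    assume "\<not> ?thesis"
    then have "finite (\<Union>a\<in>S. {j\<in>A. w j i = a})" using S by auto
    moreover have "A = (\<Union>a\<in>S. {j\<in>A. w j i = a})" using w by auto
    ultimately show False using that by simp
  qed
  have inf: "infinite (J i)" for i
  proof (induction i)
    case 0 then show ?case by (simp add: J0)
  next
    case (Suc i)
    then show ?case unfolding JS ch_def using someI_ex[OF ex[OF Suc]] by blast
  qed
  define v where "v i = ch (J i) i" for i
  have mono: "J i' \<subseteq> J i" if "i \<le> i'" for i i'
    using that
  proof (induction i' rule: dec_induct)
    case base then show ?case by simp
  next
    case (step k) then show ?case using JS[of k] by auto
  qed
  have "J M \<subseteq> {j. agree M (w j) v}" for M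
  proof
    fix j assume j: "j \<in> J M"
    have "w j i = v i" if "i < M" for i
    proof -
      have "j \<in> J (Suc i)" using mono[of "Suc i" M] that j by auto
      then show ?thesis by (simp add: JS v_def)
    qed
    then show "j \<in> {j. agree M (w j) v}" by (simp add: agree_def)
  qed
  then show ?thesis using inf infinite_super by blast
qed

lemma cr_closed:
  assumes "v \<in> X" "\<And>M. \<exists>x \<in> chain_recurrent seq_dist X shift. agree M x v"
  shows "v \<in> chain_recurrent seq_dist X shift"
  unfolding cr_alt
proof (safe)
  show "v \<in> X" by fact
  fix m
  obtain x where x: "x \<in> chain_recurrent seq_dist X shift" "agree (Suc m) x v" using assms(2) by blast
  obtain k z where kz: "k > 0" "z 0 = x" "z k = x" "\<forall>i\<le>k. z i \<in> X"
      "\<forall>i<k. agree m (shift (z i)) (z (Suc i))" using x(1) unfolding cr_alt by blast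
  define z' where "z' = (\<lambda>i. if i = 0 \<or> i = k then v else z i)"
  have az: "agree (Suc m) (z' i) (z i)" for i
    using x(2) kz(2,3) by (auto simp: z'_def agree_def)
  have "agree m (shift (z' i)) (z' (Suc i))" if "i < k" for i
  proof -
    have "agree m (shift (z' i)) (shift (z i))" using agree_shift[OF az] .
    moreover have "agree m (shift (z i)) (z (Suc i))" using kz(5) that by blast
    moreover have "agree m (z (Suc i)) (z' (Suc i))" using az[of "Suc i"] agree_sym agree_mono
      by (metis le_SucI order_refl)
    ultimately show ?thesis using agree_trans by blast
  qed
  moreover have "\<forall>i\<le>k. z' i \<in> X" using kz(4) assms(1) by (simp add: z'_def)
  ultimately show "\<exists>k>0. \<exists>z. z 0 = v \<and> z k = v \<and> (\<forall>i\<le>k. z i \<in> X) \<and> (\<forall>i<k. agree m (shift (z i)) (z (Suc i)))"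
    using kz(1) by (intro exI[of _ k] conjI exI[of _ z']) (auto simp: z'_def)
qed


lemma ucont:
  assumes sft1: "is_sft S1 X1"
    and pc: "\<forall>x\<in>X1. \<forall>m. \<exists>M. \<forall>x'\<in>X1. agree M x' x \<longrightarrow> agree m (f x') (f x)"
  shows "\<exists>M. \<forall>x\<in>X1. \<forall>x'\<in>X1. agree M x' x \<longrightarrow> agree m (f x') (f x)"
proof (rule ccontr)
  assume "\<not> ?thesis"
  then have "\<forall>M. \<exists>p. fst p \<in> X1 \<and> snd p \<in> X1 \<and> agree M (snd p) (fst p) \<and> \<not> agree m (f (snd p)) (f (fst p))"
    by (metis fst_conv snd_conv)
  then obtain g where g: "\<And>M. fst (g M) \<in> X1 \<and> snd (g M) \<in> X1 \<and> agree M (snd (g M)) (fst (g M)) \<and> \<not> agree m (f (snd (g M))) (f (fst (g M)))"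
    by metis
  define xs where "xs M = fst (g M)" for M
  define xs' where "xs' M = snd (g M)" for M
  have fin: "finite S1" using sft1 unfolding is_sft_def by blast
  obtain v where v: "\<And>M. infinite {j. agree M (xs j) v}"
    using seq_limit[OF fin, of xs] sft_vals[OF sft1] g unfolding xs_def by blast
  have "v \<in> X1"
  proof (rule sft_closed[OF sft1])
    fix M
    obtain j where "agree M (xs j) v" using not_finite_existsD[OF v[of M]] by auto
    then show "\<exists>x\<in>X1. agree M x v" using g unfolding xs_def by blast
  qed
  then obtain M0 where M0: "\<forall>x'\<in>X1. agree M0 x' v \<longrightarrow> agree m (f x') (f v)" using pc by blast
  obtain j where j: "j \<ge> M0" "agree M0 (xs j) v"
    using v[of M0] unfolding infinite_nat_iff_unbounded_le by blast
  have "agree M0 (xs' j) (xs j)" using g[of j] j(1) agree_mono unfolding xs_def xs'_def by blast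
  then have "agree M0 (xs' j) v" using j(2) agree_trans by blast
  then have "agree m (f (xs' j)) (f v)" "agree m (f (xs j)) (f v)"
    using M0 j(2) g unfolding xs_def xs'_def by blast+
  then have "agree m (f (xs' j)) (f (xs j))" using agree_trans agree_sym by blast
  then show False using g[of j] unfolding xs_def xs'_def by blast
qed

lemma image_cr:
  assumes sft1: "is_sft S1 X1" and maps: "f ` X1 \<subseteq> X0"
    and uc: "\<And>m. \<exists>M. \<forall>x\<in>X1. \<forall>x'\<in>X1. agree M x' x \<longrightarrow> agree m (f x') (f x)"
    and eqv: "\<And>x. x \<in> X1 \<Longrightarrow> shift (f x) = f (shift x)"
  shows "f ` chain_recurrent seq_dist X1 shift \<subseteq> chain_recurrent seq_dist X0 shift"
proof
  fix fy assume "fy \<in> f ` chain_recurrent seq_dist X1 shift"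
  then obtain y where y: "y \<in> chain_recurrent seq_dist X1 shift" "fy = f y" by blast
  show "fy \<in> chain_recurrent seq_dist X0 shift"
    unfolding cr_alt
  proof (safe)
    show "fy \<in> X0" using y maps unfolding cr_alt by blast
    fix m
    obtain M where M: "\<forall>x\<in>X1. \<forall>x'\<in>X1. agree M x' x \<longrightarrow> agree m (f x') (f x)" using uc by blast
    obtain k z where kz: "k > 0" "z 0 = y" "z k = y" "\<forall>i\<le>k. z i \<in> X1"
      "\<forall>i<k. agree M (shift (z i)) (z (Suc i))" using y(1) unfolding cr_alt by blast
    have "agree m (shift (f (z i))) (f (z (Suc i)))" if "i < k" for i
    proof -
      have zi: "z i \<in> X1" "z (Suc i) \<in> X1" using kz(4) that by auto
      then have "shift (z i) \<in> X1" using sft_shift[OF sft1] by blast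
      then show ?thesis using M kz(5) that zi eqv[OF zi(1)] by auto
    qed
    moreover have "\<forall>i\<le>k. f (z i) \<in> X0" using kz(4) maps by blast
    ultimately show "\<exists>k>0. \<exists>z. z 0 = fy \<and> z k = fy \<and> (\<forall>i\<le>k. z i \<in> X0) \<and> (\<forall>i<k. agree m (shift (z i)) (z (Suc i)))"
      using kz(1,2,3) y(2) by (intro exI[of _ k] conjI exI[of _ "\<lambda>i. f (z i)"]) auto
  qed
qed

lemma iter_equiv:
  assumes sft: "is_sft S X" and eqv: "\<And>x. x \<in> X \<Longrightarrow> shift (f x) = f (shift x)" and x: "x \<in> X"
  shows "(shift ^^ j) (f x) = f ((shift ^^ j) x)"
proof (induction j)
  case 0 then show ?case by simp
next
  case (Suc j)
  have "(shift ^^ j) x \<in> X" using sft_funpow[OF sft x] .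
  then show ?case using Suc eqv by simp
qed

lemma funpow_mult_periodic: "(shift ^^ p) c = c \<Longrightarrow> (shift ^^ (j * p)) c = c"
proof (induction j)
  case 0 then show ?case by simp
next
  case (Suc j)
  have "(shift ^^ (Suc j * p)) c = (shift ^^ p) ((shift ^^ (j * p)) c)"
    by (simp add: funpow_add)
  then show ?case using Suc by simp
qed


lemma omega:
  assumes sft: "is_sft S2 X2"
    and pc: "\<forall>x\<in>X2. \<forall>m. \<exists>M. \<forall>x'\<in>X2. agree M x' x \<longrightarrow> agree m (A x') (A x)"
    and eqv: "\<And>x. x \<in> X2 \<Longrightarrow> shift (A x) = A (shift x)"
    and w: "w \<in> X2" "A w = c" and p: "p > 0" "(shift ^^ p) c = c"
  shows "\<exists>v \<in> chain_recurrent seq_dist X2 shift. A v = c"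
proof -
  define ws where "ws j = (shift ^^ (j * p)) w" for j
  have wsX: "ws j \<in> X2" for j unfolding ws_def using sft_funpow[OF sft w(1)] .
  have Aws: "A (ws j) = c" for j
    unfolding ws_def using iter_equiv[of S2 X2 A w "j * p", OF sft eqv w(1), symmetric] w(2)
      funpow_mult_periodic[OF p(2)] by simp
  have fin: "finite S2" using sft unfolding is_sft_def by blast
  obtain v where v: "\<And>M. infinite {j. agree M (ws j) v}"
    using seq_limit[OF fin, of ws] sft_vals[OF sft] wsX by blast
  have vX: "v \<in> X2"
  proof (rule sft_closed[OF sft])
    fix M
    obtain j where "agree M (ws j) v" using not_finite_existsD[OF v[of M]] by auto
    then show "\<exists>x\<in>X2. agree M x v" using wsX by blast
  qed
  have "A v = c"
  proof (rule agree_all)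
    fix m
    obtain M where M: "\<forall>x'\<in>X2. agree M x' v \<longrightarrow> agree m (A x') (A v)" using pc vX by blast
    obtain j where "agree M (ws j) v" using not_finite_existsD[OF v[of M]] by auto
    then have "agree m (A (ws j)) (A v)" using M wsX by blast
    then show "agree m (A v) c" using Aws agree_sym by metis
  qed
  moreover have "v \<in> chain_recurrent seq_dist X2 shift"
    unfolding cr_alt
  proof (safe)
    show "v \<in> X2" by fact
    fix m
    define I where "I = {j. agree (Suc m) (ws j) v}"
    obtain j1 where j1: "j1 \<in> I" using not_finite_existsD[OF v[of "Suc m"]] I_def by auto
    obtain j2 where j2: "j2 \<in> I" "j2 > j1" using v[of "Suc m"] unfolding infinite_nat_iff_unbounded I_def[symmetric] by blast
    define k where "k = (j2 - j1) * p"
    have k0: "k > 0" using j2(2) p(1) by (simp add: k_def)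
    define u where "u i = (shift ^^ i) (ws j1)" for i
    have u0: "u 0 = ws j1" by (simp add: u_def)
    have uk: "u k = ws j2"
    proof -
      have "u k = (shift ^^ (k + j1 * p)) w" by (simp add: u_def ws_def funpow_add)
      moreover have "k + j1 * p = j2 * p" using j2(2) by (simp add: k_def add_mult_distrib[symmetric])
      ultimately show ?thesis by (simp add: ws_def)
    qed
    have uS: "shift (u i) = u (Suc i)" for i by (simp add: u_def)
    have uX: "u i \<in> X2" for i unfolding u_def using sft_funpow[OF sft wsX] .
    define z where "z = (\<lambda>i. if i = 0 \<or> i = k then v else u i)"
    have az: "agree (Suc m) (z i) (u i)" for i
      using j1 j2(1) u0 uk agree_sym unfolding z_def I_def by (auto simp: agree_def)
    have "agree m (shift (z i)) (z (Suc i))" for i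
    proof -
      have "agree m (shift (z i)) (shift (u i))" using agree_shift[OF az] .
      moreover have "agree m (u (Suc i)) (z (Suc i))" using az[of "Suc i"] agree_sym agree_mono
        by (metis le_SucI order_refl)
      ultimately show ?thesis using agree_trans uS by metis
    qed
    moreover have "\<forall>i\<le>k. z i \<in> X2" using uX vX by (simp add: z_def)
    ultimately have "(\<forall>i. agree m (shift (z i)) (z (Suc i))) \<and> (\<forall>i\<le>k. z i \<in> X2)" by blast
    note zz = this
    show "\<exists>k>0. \<exists>z. z 0 = v \<and> z k = v \<and> (\<forall>i\<le>k. z i \<in> X2) \<and> (\<forall>i<k. agree m (shift (z i)) (z (Suc i)))"
    proof -
      have "z 0 = v" "z k = v" by (simp_all add: z_def)
      then show ?thesis using k0 zz by blast
    qed
  qed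
  ultimately show ?thesis by blast
qed


theorem lemma4p2:
  fixes S :: "nat \<Rightarrow> 'a set"
    and X :: "nat \<Rightarrow> (nat \<Rightarrow> 'a) set"
    and \<pi> :: "nat \<Rightarrow> (nat \<Rightarrow> 'a) \<Rightarrow> (nat \<Rightarrow> 'a)"
  assumes sft: "\<And>n. is_sft (S n) (X n)"
    and maps: "\<And>n. \<pi> n ` X (Suc n) \<subseteq> X n"
    and cont: "\<And>n. continuous_map (subtopology seq_top (X (Suc n)))
                                    (subtopology seq_top (X n)) (\<pi> n)"
    and equiv: "\<And>n x. x \<in> X (Suc n) \<Longrightarrow> shift (\<pi> n x) = \<pi> n (shift x)"
    and mlc: "MLC1 X \<pi>"
  defines "Y \<equiv> \<lambda>n. chain_recurrent seq_dist (X n) shift"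
  shows "(\<forall>n. \<pi> n ` Y (Suc n) \<subseteq> Y n) \<and> MLC1 Y \<pi>"
proof -
  have pc: "\<forall>x\<in>X (Suc n). \<forall>m. \<exists>M. \<forall>x'\<in>X (Suc n). agree M x' x \<longrightarrow> agree m (\<pi> n x') (\<pi> n x)" for n
    using cont_pt[OF cont] by blast
  have part1: "\<pi> n ` Y (Suc n) \<subseteq> Y n" for n
    unfolding Y_def
    by (rule image_cr[OF sft maps ucont[OF sft pc] equiv])
  have YX: "Y n \<subseteq> X n" for n unfolding Y_def cr_alt by blast
  have "\<pi> n ` Y (Suc n) = \<pi> n ` \<pi> (Suc n) ` Y (Suc (Suc n))" for n
  proof
    show "\<pi> n ` \<pi> (Suc n) ` Y (Suc (Suc n)) \<subseteq> \<pi> n ` Y (Suc n)"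
      using part1[of "Suc n"] by blast
  next
    show "\<pi> n ` Y (Suc n) \<subseteq> \<pi> n ` \<pi> (Suc n) ` Y (Suc (Suc n))"
    proof
      fix By assume "By \<in> \<pi> n ` Y (Suc n)"
      then obtain y where y: "y \<in> Y (Suc n)" "By = \<pi> n y" by blast
      have yX: "y \<in> X (Suc n)" using y YX by blast
      define A where "A x = \<pi> n (\<pi> (Suc n) x)" for x
      have pcA: "\<forall>x\<in>X (Suc (Suc n)). \<forall>m. \<exists>M. \<forall>x'\<in>X (Suc (Suc n)). agree M x' x \<longrightarrow> agree m (A x') (A x)"
      proof (intro ballI allI)
        fix x m assume x: "x \<in> X (Suc (Suc n))"
        have px: "\<pi> (Suc n) x \<in> X (Suc n)" using maps x by blast
        obtain M1 where M1: "\<forall>x'\<in>X (Suc n). agree M1 x' (\<pi> (Suc n) x) \<longrightarrow> agree m (\<pi> n x') (\<pi> n (\<pi> (Suc n) x))"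
          using pc[of n] px by blast
        obtain M where M: "\<forall>x'\<in>X (Suc (Suc n)). agree M x' x \<longrightarrow> agree M1 (\<pi> (Suc n) x') (\<pi> (Suc n) x)"
          using pc[of "Suc n"] x by blast
        have "\<forall>x'\<in>X (Suc (Suc n)). agree M x' x \<longrightarrow> agree m (A x') (A x)"
        proof (intro ballI impI)
          fix x' assume x': "x' \<in> X (Suc (Suc n))" "agree M x' x"
          have "\<pi> (Suc n) x' \<in> X (Suc n)" using maps x'(1) by blast
          moreover have "agree M1 (\<pi> (Suc n) x') (\<pi> (Suc n) x)" using M x' by blast
          ultimately show "agree m (A x') (A x)" unfolding A_def using M1 by blast
        qed
        then show "\<exists>M. \<forall>x'\<in>X (Suc (Suc n)). agree M x' x \<longrightarrow> agree m (A x') (A x)" by blast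
      qed
      have eqA: "shift (A x) = A (shift x)" if "x \<in> X (Suc (Suc n))" for x
      proof -
        have "\<pi> (Suc n) x \<in> X (Suc n)" using maps that by blast
        then show ?thesis unfolding A_def using equiv that by simp
      qed
      have step: "\<exists>v \<in> Y (Suc (Suc n)). agree m (A v) By" for m
      proof -
        obtain M where M: "\<forall>x'\<in>X (Suc n). agree M x' y \<longrightarrow> agree m (\<pi> n x') (\<pi> n y)"
          using pc[of n] yX by blast
        obtain q k where q: "q \<in> X (Suc n)" "k > 0" "(shift ^^ k) q = q" "agree M q y"
          using sft_periodic[OF sft y(1)[unfolded Y_def, simplified], of M] by blast
        have Bq: "agree m (\<pi> n q) By" using M q(1,4) unfolding y(2) by blast
        have "\<pi> n q \<in> \<pi> n ` \<pi> (Suc n) ` X (Suc (Suc n))"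
        proof -
          have "\<pi> n q \<in> \<pi> n ` X (Suc n)" using q(1) by blast
          also have "\<dots> = \<pi> n ` \<pi> (Suc n) ` X (Suc (Suc n))" by (rule mlc[unfolded MLC1_def, rule_format, of n])
          finally show ?thesis .
        qed
        then obtain w where w: "w \<in> X (Suc (Suc n))" "\<pi> n q = \<pi> n (\<pi> (Suc n) w)"
          by (auto elim!: imageE)
        then have w2: "A w = \<pi> n q" by (simp add: A_def)
        have per: "(shift ^^ k) (\<pi> n q) = \<pi> n q"
          using iter_equiv[of "S (Suc n)" "X (Suc n)" "\<pi> n" q k, OF sft equiv q(1)] q(3) by simp
        obtain v where v: "v \<in> chain_recurrent seq_dist (X (Suc (Suc n))) shift" "A v = \<pi> n q"
          using omega[OF sft pcA eqA w(1) w2 q(2) per] by blast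
        then have "v \<in> Y (Suc (Suc n))" "agree m (A v) By" using Bq unfolding Y_def by simp_all
        then show ?thesis by blast
      qed
      then obtain vs where vs: "\<And>m. vs m \<in> Y (Suc (Suc n)) \<and> agree m (A (vs m)) By"
        using bchoice[of UNIV "\<lambda>m v. v \<in> Y (Suc (Suc n)) \<and> agree m (A v) By"] by blast
      have vsX: "vs j \<in> X (Suc (Suc n))" for j using vs YX by blast
      have fin: "finite (S (Suc (Suc n)))" using sft unfolding is_sft_def by blast
      obtain v where v: "\<And>M. infinite {j. agree M (vs j) v}"
        using seq_limit[OF fin, of vs] sft_vals[OF sft] vsX by blast
      have vX: "v \<in> X (Suc (Suc n))"
      proof (rule sft_closed[OF sft])
        fix M
        obtain j where "agree M (vs j) v" using not_finite_existsD[OF v[of M]] by auto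
        then show "\<exists>x\<in>X (Suc (Suc n)). agree M x v" using vsX by blast
      qed
      have vY: "v \<in> Y (Suc (Suc n))"
        unfolding Y_def
      proof (rule cr_closed[OF vX])
        fix M
        obtain j where "agree M (vs j) v" using not_finite_existsD[OF v[of M]] by auto
        then show "\<exists>x\<in>chain_recurrent seq_dist (X (Suc (Suc n))) shift. agree M x v"
          using vs unfolding Y_def by blast
      qed
      have "A v = By"
      proof (rule agree_all)
        fix m
        obtain M where M: "\<forall>x'\<in>X (Suc (Suc n)). agree M x' v \<longrightarrow> agree m (A x') (A v)"
          using pcA vX by blast
        obtain j where j: "j \<ge> m" "agree M (vs j) v"
          using v[of M] unfolding infinite_nat_iff_unbounded_le by blast
        have "agree m (A (vs j)) (A v)" using M j vsX by blast
        moreover have "agree m (A (vs j)) By" using vs[of j] j(1) agree_mono by blast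
        ultimately show "agree m (A v) By" using agree_trans agree_sym by blast
      qed
      then show "By \<in> \<pi> n ` \<pi> (Suc n) ` Y (Suc (Suc n))" using vY unfolding A_def by blast
    qed
  qed
  then show ?thesis using part1 unfolding MLC1_def by blast
qed

end
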